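(* Assume there is $\lambda>0$ with $\lim_{k\to\infty}f(k)k^{1+\lambda}=0$, and let $\mu=\mathbb{E}[R]$ and $g_n=\frac{1}{\mu}\sum_{i=1}^n f(i)$. Then for every $\alpha\in(0,1)$ and every $\delta>0$, $$\lim_{n\to\infty}\mathbb{P}\Big(\big||\mathcal{V}_\alpha|-n^{1-g_n\alpha}\big|\ge\delta\,n^{1-g_n\alpha}\Big)=0,$$ where $\mathcal{V}_\alpha=(\mathbb{Z}/n\mathbb{Z})\setminus X_{\alpha n\ln n/\mu}$.
   Context: Covering process: $R$ takes values in $\{1,2,\dots\}$, $f(r)=\mathbb{P}(R\ge r)$. On $\mathbb{Z}/n\mathbb{Z}$, let $(R_k)$ be i.i.d. copies of $R$, $(U_k)$ i.i.d. uniform on $\mathbb{Z}/n\mathbb{Z}$, independent; $\mathcal{O}_k=\{U_k,\dots,U_k+R_k-1\}$ (mod $n$), $C_0=\emptyset$, $C_k=C_{k-1}\cup\mathcal{O}_k$; with an independent rate-one Poisson process $N(t)$, $X_t=C_{N(t)}$. *)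

theory Defs
  imports "HOL-Probability.Probability"
begin

definition tailf :: "nat pmf \<Rightarrow> nat \<Rightarrow> real" where
  "tailf R r = measure_pmf.prob R {r..}"

definition meanR :: "nat pmf \<Rightarrow> real" where
  "meanR R = measure_pmf.expectation R real"

text \<open>The arc O = {u, u+1, ..., u+r-1} (mod n) in Z/nZ, represented by {0..<n}.\<close>
definition arc :: "nat \<Rightarrow> nat \<Rightarrow> nat \<Rightarrow> nat set" where
  "arc n u r = {(u + j) mod n | j. j < r}"

text \<open>Law of C_k: C_0 = {}, C_k = C_(k-1) \<union> O_k with O_k built from fresh
  independent U_k uniform on Z/nZ and R_k ~ R.\<close>
fun cover_law :: "nat pmf \<Rightarrow> nat \<Rightarrow> nat \<Rightarrow> nat set pmf" where
  "cover_law R n 0 = return_pmf {}"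
| "cover_law R n (Suc k) =
     bind_pmf (cover_law R n k) (\<lambda>C.
     bind_pmf (pmf_of_set {0..<n}) (\<lambda>u.
     map_pmf (\<lambda>r. C \<union> arc n u r) R))"

text \<open>Law of X_t = C_{N(t)} with N an independent rate-one Poisson process
  (N(t) ~ Poisson(t)).\<close>
definition X_law :: "nat pmf \<Rightarrow> nat \<Rightarrow> real \<Rightarrow> nat set pmf" where
  "X_law R n t = bind_pmf (poisson_pmf t) (\<lambda>k. cover_law R n k)"

end

theory Submission
  imports Defs
begin
lemma prob_bind_pmf:
  "measure_pmf.prob (bind_pmf M N) X = measure_pmf.expectation M (\<lambda>x. measure_pmf.prob (N x) X)"
  unfolding measure_pmf_bind
  by (rule measure_pmf.measure_bind[where N="count_space UNIV"])
     (auto simp: space_subprob_algebra intro: prob_space_imp_subprob_space measure_pmf.prob_space_axioms)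

definition Ol :: "nat pmf \<Rightarrow> nat \<Rightarrow> nat set pmf" where
  "Ol R n = bind_pmf (pmf_of_set {0..<n}) (\<lambda>u. map_pmf (arc n u) R)"

lemma cover_Suc': "cover_law R n (Suc k) = bind_pmf (cover_law R n k) (\<lambda>C. map_pmf (\<lambda>Z. C \<union> Z) (Ol R n))"
  by (simp add: Ol_def map_bind_pmf pmf.map_comp o_def)

lemma prob_cover_avoid:
  "measure_pmf.prob (cover_law R n k) {C. A \<inter> C = {}} = (measure_pmf.prob (Ol R n) {Z. A \<inter> Z = {}}) ^ k"
proof (induction k)
  case 0
  then show ?case by simp
next
  case (Suc k)
  let ?q = "measure_pmf.prob (Ol R n) {Z. A \<inter> Z = {}}"
  have "measure_pmf.prob (cover_law R n (Suc k)) {C. A \<inter> C = {}}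
     = measure_pmf.expectation (cover_law R n k) (\<lambda>C. measure_pmf.prob (map_pmf (\<lambda>Z. C \<union> Z) (Ol R n)) {C. A \<inter> C = {}})"
    by (simp only: cover_Suc' prob_bind_pmf)
  also have "\<dots> = measure_pmf.expectation (cover_law R n k) (\<lambda>C. ?q * indicator {C. A \<inter> C = {}} C)"
  proof (rule Bochner_Integration.integral_cong[OF refl])
    fix C
    have "(\<lambda>Z. C \<union> Z) -` {C. A \<inter> C = {}} = (if A \<inter> C = {} then {Z. A \<inter> Z = {}} else {})"
      by auto
    then show "measure_pmf.prob (map_pmf (\<lambda>Z. C \<union> Z) (Ol R n)) {C. A \<inter> C = {}} = ?q * indicator {C. A \<inter> C = {}} C"
      by (simp add: measure_map_pmf indicator_def)
  qed
  also have "\<dots> = ?q * measure_pmf.prob (cover_law R n k) {C. A \<inter> C = {}}"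
    by simp
  finally show ?case using Suc by simp
qed

lemma poisson_expect_pow:
  assumes t: "0 < t" and a: "0 \<le> a" "a \<le> 1"
  shows "measure_pmf.expectation (poisson_pmf t) (\<lambda>k. a ^ k) = exp (- t * (1 - a))"
proof -
  have "measure_pmf.expectation (poisson_pmf t) (\<lambda>k. a ^ k)
      = integral\<^sup>L (count_space UNIV) (\<lambda>k. pmf (poisson_pmf t) k * a ^ k)"
    unfolding measure_pmf_eq_density
    by (subst integral_density) auto
  also have "\<dots> = (\<Sum>k. (t * a) ^ k / fact k * exp (- t))"
  proof -
    have s0: "summable (\<lambda>k. (t * a) ^ k / fact k)"
      using summable_exp_generic[of "t*a"] by (simp add: scaleR_conv_of_real divide_inverse mult.commute)
    have s: "summable (\<lambda>k. (t * a) ^ k / fact k * exp (- t))"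
      by (intro summable_mult2 s0)
    have "integrable (count_space UNIV) (\<lambda>k. pmf (poisson_pmf t) k * a ^ k)"
      unfolding integrable_count_space_nat_iff using s t a
      by (simp add: power_mult_distrib abs_mult mult_ac)
    then show ?thesis
      using t by (subst integral_count_space_nat) (simp_all add: power_mult_distrib mult_ac)
  qed
  also have "\<dots> = exp (t * a) * exp (- t)"
  proof -
    have s0: "summable (\<lambda>k. (t * a) ^ k / fact k)"
      using summable_exp_generic[of "t*a"] by (simp add: scaleR_conv_of_real divide_inverse mult.commute)
    show ?thesis
      by (subst suminf_mult2[symmetric, OF s0]) (simp add: exp_def scaleR_conv_of_real divide_inverse mult.commute)
  qed
  also have "\<dots> = exp (- t * (1 - a))"
    by (simp add: mult_exp_exp algebra_simps)
  finally show ?thesis .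
qed

lemma prob_X_avoid:
  assumes t: "0 < t"
  shows "measure_pmf.prob (X_law R n t) {C. A \<inter> C = {}} = exp (- t * (1 - measure_pmf.prob (Ol R n) {Z. A \<inter> Z = {}}))"
  unfolding X_law_def prob_bind_pmf prob_cover_avoid
  by (rule poisson_expect_pow[OF t]) auto

lemma Ol_swap: "Ol R n = bind_pmf R (\<lambda>r. map_pmf (\<lambda>u. arc n u r) (pmf_of_set {0..<n}))"
  unfolding Ol_def map_pmf_def
  by (subst bind_commute_pmf) (simp add: o_def)

lemma prob_Ol:
  assumes n: "0 < n"
  shows "measure_pmf.prob (Ol R n) {Z. P Z} =
    measure_pmf.expectation R (\<lambda>r. real (card {u\<in>{0..<n}. P (arc n u r)}) / real n)"
  unfolding Ol_swap prob_bind_pmf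
proof (rule Bochner_Integration.integral_cong[OF refl])
  fix r
  have "{0..<n} \<inter> {u. P (arc n u r)} = {u\<in>{0..<n}. P (arc n u r)}" by auto
  then show "measure_pmf.prob (map_pmf (\<lambda>u. arc n u r) (pmf_of_set {0..<n})) {Z. P Z} =
    real (card {u\<in>{0..<n}. P (arc n u r)}) / real n"
    using n by (simp add: measure_map_pmf measure_pmf_of_set vimage_def)
qed

lemma modaux1: "\<lbrakk>(u::nat) < n\<rbrakk> \<Longrightarrow> ((u + j) mod n + n - u) mod n = j mod n"
  by (metis (no_types, opaque_lifting) add.assoc diff_add_inverse
    mod_add_left_eq mod_add_self2 order.strict_iff_not
    ordered_cancel_comm_monoid_diff_class.diff_add_assoc)
lemma modaux2: "\<lbrakk>(u::nat) < n; x < n\<rbrakk> \<Longrightarrow> (u + (x + n - u) mod n) mod n = x"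
  by (metis add_leD2 linordered_semidom_class.add_diff_inverse
    mod_add_right_eq mod_add_self2 mod_if nless_le order_less_asym')

lemma arc_mem_iff:
  assumes n: "0 < n" and u: "u < n" and x: "x < n"
  shows "x \<in> arc n u r \<longleftrightarrow> (x + n - u) mod n < r"
proof
  assume "x \<in> arc n u r"
  then obtain j where j: "j < r" "x = (u + j) mod n" unfolding arc_def by auto
  have "(x + n - u) mod n = j mod n" using j(2) modaux1[OF u] by simp
  then show "(x + n - u) mod n < r" using j
    by (metis le_less_trans mod_less_eq_dividend)
next
  assume h: "(x + n - u) mod n < r"
  have "(u + (x + n - u) mod n) mod n = x" by (rule modaux2[OF u x])
  then have "\<exists>j. x = (u + j) mod n \<and> j < r" using h by metis
  then show "x \<in> arc n u r" unfolding arc_def by blast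
qed

lemma inj_refl_mod_aux: "\<lbrakk>(x::nat) < n; u < n; v < n; (x + (n - u)) mod n = (x + (n - v)) mod n\<rbrakk> \<Longrightarrow> u = v"
  by (smt (verit, del_insts) add.assoc add.commute add_diff_inverse_nat
    mod_add_left_eq mod_add_self1 mod_less order_less_imp_not_less)

lemma inj_refl_mod:
  fixes x n :: nat
  assumes x: "x < n"
  shows "inj_on (\<lambda>u. (x + n - u) mod n) {0..<n}"
proof (rule inj_onI)
  fix u v assume u: "u \<in> {0..<n}" and v: "v \<in> {0..<n}" and e: "(x + n - u) mod n = (x + n - v) mod n"
  have eqs: "x + n - u = x + (n - u)" "x + n - v = x + (n - v)" using u v by auto
  have e': "(x + (n - u)) mod n = (x + (n - v)) mod n" using e by (simp only: eqs)
  show "u = v" by (rule inj_refl_mod_aux[OF x _ _ e']) (use u v in auto)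
qed

lemma card_cover_point:
  assumes n: "0 < n" and x: "x < n"
  shows "card {u\<in>{0..<n}. x \<in> arc n u r} = min r n"
proof -
  let ?f = "\<lambda>u. (x + n - u) mod n"
  have eq: "{u\<in>{0..<n}. x \<in> arc n u r} = {u\<in>{0..<n}. ?f u < r}"
  proof (rule Collect_cong)
    fix u show "(u \<in> {0..<n} \<and> x \<in> arc n u r) = (u \<in> {0..<n} \<and> ?f u < r)"
      using arc_mem_iff[OF n _ x, of u r] by auto
  qed
  have inj: "inj_on ?f {0..<n}" by (rule inj_refl_mod[OF x])
  have sub: "?f ` {0..<n} \<subseteq> {0..<n}" using n by auto
  have img: "?f ` {0..<n} = {0..<n}"
    by (rule endo_inj_surj[OF _ sub inj]) simp
  have im2: "?f ` {u\<in>{0..<n}. ?f u < r} = {v\<in>{0..<n}. v < r}"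
  proof
    show "?f ` {u\<in>{0..<n}. ?f u < r} \<subseteq> {v\<in>{0..<n}. v < r}" using n by auto
    show "{v\<in>{0..<n}. v < r} \<subseteq> ?f ` {u\<in>{0..<n}. ?f u < r}"
    proof
      fix v assume v: "v \<in> {v\<in>{0..<n}. v < r}"
      then have "v \<in> ?f ` {0..<n}" using img by simp
      then obtain u where "u \<in> {0..<n}" "v = ?f u" by blast
      then show "v \<in> ?f ` {u\<in>{0..<n}. ?f u < r}" using v by blast
    qed
  qed
  have inj2: "inj_on ?f {u\<in>{0..<n}. ?f u < r}"
    by (rule inj_on_subset[OF inj]) blast
  have "card {u\<in>{0..<n}. x \<in> arc n u r} = card {u\<in>{0..<n}. ?f u < r}" by (simp only: eq)
  also have "\<dots> = card (?f ` {u\<in>{0..<n}. ?f u < r})" by (rule card_image[OF inj2, symmetric])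
  also have "\<dots> = card {v\<in>{0..<n}. v < r}" by (simp only: im2)
  also have "{v\<in>{0..<n}. v < r} = {0..<min r n}" by auto
  finally show ?thesis by simp
qed

lemma card_arc_le: "card (arc n u r) \<le> r"
proof -
  have "arc n u r = (\<lambda>j. (u + j) mod n) ` {..<r}" unfolding arc_def by auto
  then show ?thesis by (metis card_image_le card_lessThan finite_lessThan)
qed

lemma arc_mono: "r \<le> D \<Longrightarrow> arc n u r \<subseteq> arc n u D"
  unfolding arc_def by auto

definition close :: "nat \<Rightarrow> nat \<Rightarrow> nat \<Rightarrow> nat \<Rightarrow> bool" where
  "close n D x y \<longleftrightarrow> (\<exists>u<n. x \<in> arc n u D \<and> y \<in> arc n u D)"

lemma card_close:
  "card {(x,y). x < n \<and> y < n \<and> close n D x y} \<le> n * D^2"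
proof -
  have sub: "{(x,y). x < n \<and> y < n \<and> close n D x y} \<subseteq> (\<Union>u\<in>{..<n}. arc n u D \<times> arc n u D)"
    unfolding close_def by auto
  have fin: "finite (arc n u D)" for u
    unfolding arc_def by auto
  have "card {(x,y). x < n \<and> y < n \<and> close n D x y} \<le> card (\<Union>u\<in>{..<n}. arc n u D \<times> arc n u D)"
    by (rule card_mono[OF _ sub]) (auto simp: fin)
  also have "\<dots> \<le> (\<Sum>u<n. card (arc n u D \<times> arc n u D))"
    by (rule card_UN_le) simp
  also have "\<dots> \<le> (\<Sum>u<n. D^2)"
    by (rule sum_mono) (simp add: card_cartesian_product power2_eq_square card_arc_le mult_le_mono)
  finally show ?thesis by simp
qed

lemma min_as_sum: "real (min r n) = (\<Sum>i\<in>{1..n}. indicator {i..} r)"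
proof -
  have "(\<Sum>i\<in>{1..n}. indicator {i..} r :: real) = real (card {i\<in>{1..n}. i \<le> r})"
    by (simp add: indicator_def sum.If_cases) (auto intro!: arg_cong[where f=card])
  also have "{i\<in>{1..n}. i \<le> r} = {1..min r n}" by auto
  finally show ?thesis by simp
qed

lemma min_tail_as_sum: "(if D < r then real (min r n) else 0) = (\<Sum>i\<in>{1..n}. indicator {max i (Suc D)..} r)"
proof -
  have "(\<Sum>i\<in>{1..n}. indicator {max i (Suc D)..} r :: real) = real (card {i\<in>{1..n}. max i (Suc D) \<le> r})"
    by (simp add: indicator_def sum.If_cases) (auto intro!: arg_cong[where f=card])
  also have "{i\<in>{1..n}. max i (Suc D) \<le> r} = (if D < r then {1..min r n} else {})" by auto
  finally show ?thesis by simp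
qed

lemma expect_min: "measure_pmf.expectation R (\<lambda>r. real (min r n)) = (\<Sum>i\<in>{1..n}. tailf R i)"
  unfolding min_as_sum tailf_def
  by (subst Bochner_Integration.integral_sum) (auto intro!: sum.cong measure_pmf.integrable_const_bound[where B=1])

lemma expect_min_tail: "measure_pmf.expectation R (\<lambda>r. if D < r then real (min r n) else 0)
   = (\<Sum>i\<in>{1..n}. tailf R (max i (Suc D)))"
  unfolding min_tail_as_sum tailf_def
  by (subst Bochner_Integration.integral_sum) (auto intro!: sum.cong measure_pmf.integrable_const_bound[where B=1])

lemma prob_pt:
  assumes n: "0 < n" and x: "x < n"
  shows "measure_pmf.prob (Ol R n) {Z. x \<in> Z} = (\<Sum>i=1..n. tailf R i) / real n"
proof -
  have "measure_pmf.prob (Ol R n) {Z. x \<in> Z} =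
    measure_pmf.expectation R (\<lambda>r. real (min r n) / real n)"
  proof -
    have e: "\<And>r. card {u\<in>{0..<n}. x \<in> arc n u r} = min r n" by (rule card_cover_point[OF n x])
    show ?thesis by (subst prob_Ol[OF n]) (simp only: e)
  qed
  also have "\<dots> = (\<Sum>i=1..n. tailf R i) / real n"
    by (simp add: expect_min)
  finally show ?thesis .
qed

lemma prob_pair_le_pt:
  "measure_pmf.prob (Ol R n) {Z. x \<in> Z \<and> y \<in> Z} \<le> measure_pmf.prob (Ol R n) {Z. x \<in> Z}"
  by (rule measure_pmf.finite_measure_mono) auto

lemma prob_pair_far:
  assumes n: "0 < n" and x: "x < n" and y: "y < n" and far: "\<not> close n D x y"
  shows "measure_pmf.prob (Ol R n) {Z. x \<in> Z \<and> y \<in> Z} \<le> (\<Sum>i=1..n. tailf R (max i (Suc D))) / real n"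
proof -
  have "measure_pmf.prob (Ol R n) {Z. x \<in> Z \<and> y \<in> Z} =
    measure_pmf.expectation R (\<lambda>r. real (card {u\<in>{0..<n}. x \<in> arc n u r \<and> y \<in> arc n u r}) / real n)"
    by (rule prob_Ol[OF n])
  also have "\<dots> \<le> measure_pmf.expectation R (\<lambda>r. (if D < r then real (min r n) else 0) / real n)"
  proof (rule Bochner_Integration.integral_mono)
    have cb: "card {u\<in>{0..<n}. x \<in> arc n u r \<and> y \<in> arc n u r} \<le> n" for r
    proof -
      have "card {u\<in>{0..<n}. x \<in> arc n u r \<and> y \<in> arc n u r} \<le> card {0..<n}"
        by (rule card_mono) auto
      then show ?thesis by simp
    qed
    show "integrable (measure_pmf R) (\<lambda>r. real (card {u\<in>{0..<n}. x \<in> arc n u r \<and> y \<in> arc n u r}) / real n)"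
    proof (rule measure_pmf.integrable_const_bound[where B=1])
      show "AE r in measure_pmf R. norm (real (card {u\<in>{0..<n}. x \<in> arc n u r \<and> y \<in> arc n u r}) / real n) \<le> 1"
        using cb n by (simp add: divide_le_eq)
    qed simp
    show "integrable (measure_pmf R) (\<lambda>r. (if D < r then real (min r n) else 0) / real n)"
      by (rule measure_pmf.integrable_const_bound[where B=1]) (auto simp: divide_le_eq)
    fix r
    show "real (card {u\<in>{0..<n}. x \<in> arc n u r \<and> y \<in> arc n u r}) / real n
       \<le> (if D < r then real (min r n) else 0) / real n"
    proof (cases "D < r")
      case True
      have "card {u\<in>{0..<n}. x \<in> arc n u r \<and> y \<in> arc n u r} \<le> card {u\<in>{0..<n}. x \<in> arc n u r}"
        by (rule card_mono) auto
      then show ?thesis using True card_cover_point[OF n x, of r] by (simp add: divide_right_mono)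
    next
      case False
      have "{u\<in>{0..<n}. x \<in> arc n u r \<and> y \<in> arc n u r} = {}"
      proof (rule ccontr)
        assume "{u\<in>{0..<n}. x \<in> arc n u r \<and> y \<in> arc n u r} \<noteq> {}"
        then obtain u where u: "u < n" "x \<in> arc n u r" "y \<in> arc n u r" by auto
        have "arc n u r \<subseteq> arc n u D" using False by (intro arc_mono) simp
        then have "close n D x y" unfolding close_def using u by blast
        then show False using far by contradiction
      qed
      then have c0: "card {u\<in>{0..<n}. x \<in> arc n u r \<and> y \<in> arc n u r} = 0" by (simp only: card.empty)
      show ?thesis unfolding c0 using False by simp
    qed
  qed
  also have "\<dots> = (\<Sum>i=1..n. tailf R (max i (Suc D))) / real n"
    by (simp add: expect_min_tail)
  finally show ?thesis .
qed

lemma prob_avoid_pair: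
  "measure_pmf.prob (Ol R n) {Z. {x, y} \<inter> Z = {}} =
    1 - (measure_pmf.prob (Ol R n) {Z. x \<in> Z} + measure_pmf.prob (Ol R n) {Z. y \<in> Z}
         - measure_pmf.prob (Ol R n) {Z. x \<in> Z \<and> y \<in> Z})"
proof -
  have "{Z. {x, y} \<inter> Z = {}} = UNIV - ({Z. x \<in> Z} \<union> {Z. y \<in> Z})" by auto
  then have "measure_pmf.prob (Ol R n) {Z. {x, y} \<inter> Z = {}} = 1 - measure_pmf.prob (Ol R n) ({Z. x \<in> Z} \<union> {Z. y \<in> Z})"
    using measure_pmf.prob_compl[of "{Z. x \<in> Z} \<union> {Z. y \<in> Z}" "Ol R n"] by simp
  also have "measure_pmf.prob (Ol R n) ({Z. x \<in> Z} \<union> {Z. y \<in> Z}) =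
     measure_pmf.prob (Ol R n) {Z. x \<in> Z} + measure_pmf.prob (Ol R n) {Z. y \<in> Z}
         - measure_pmf.prob (Ol R n) ({Z. x \<in> Z} \<inter> {Z. y \<in> Z})"
    by (rule measure_Un3) (auto simp: fmeasurable_def measure_pmf.emeasure_eq_measure)
  also have "{Z. x \<in> Z} \<inter> {Z. y \<in> Z} = {Z. x \<in> Z \<and> y \<in> Z}" by auto
  finally show ?thesis .
qed

lemma Y_sum: fixes n :: nat shows "real (card ({0..<n} - X)) = (\<Sum>x<n. indicator {X. {x} \<inter> X = {}} X)"
proof -
  have "(\<Sum>x<n. indicator {X. {x} \<inter> X = {}} X :: real) = (\<Sum>x\<in>{..<n}. if x \<notin> X then 1 else 0)"
    by (intro sum.cong) (auto simp: indicator_def)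
  also have "\<dots> = (\<Sum>x\<in>{x\<in>{..<n}. x \<notin> X}. 1)"
    using sum.inter_filter[of "{..<n}" "\<lambda>_. 1::real" "\<lambda>x. x \<notin> X"] by simp
  also have "\<dots> = real (card {x\<in>{..<n}. x \<notin> X})" by simp
  also have "{x\<in>{..<n}. x \<notin> X} = {0..<n} - X" by auto
  finally show ?thesis by simp
qed

lemma Y2_sum: fixes n :: nat shows "(real (card ({0..<n} - X)))^2 = (\<Sum>x<n. \<Sum>y<n. indicator {X. {x, y} \<inter> X = {}} X)"
proof -
  have "(real (card ({0..<n} - X)))^2 = (\<Sum>x<n. indicator {X. {x} \<inter> X = {}} X) * (\<Sum>y<n. indicator {X. {y} \<inter> X = {}} X)"
    by (simp only: Y_sum power2_eq_square)
  also have "\<dots> = (\<Sum>x<n. \<Sum>y<n. indicator {X. {x} \<inter> X = {}} X * indicator {X. {y} \<inter> X = {}} X)"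
    by (rule sum_product)
  also have "\<dots> = (\<Sum>x<n. \<Sum>y<n. indicator {X. {x, y} \<inter> X = {}} X)"
    by (intro sum.cong refl) (simp add: indicator_def)
  finally show ?thesis .
qed

lemma sum_if_const_card:
  fixes n :: nat and c :: real
  shows "(\<Sum>x<n. \<Sum>y<n. if P x y then c else 0) = c * real (card {(x,y). x < n \<and> y < n \<and> P x y})"
proof -
  have "(\<Sum>x<n. \<Sum>y<n. if P x y then c else 0) = (\<Sum>xy\<in>{..<n} \<times> {..<n}. if P (fst xy) (snd xy) then c else 0)"
    by (simp add: sum.cartesian_product case_prod_beta)
  also have "\<dots> = (\<Sum>xy\<in>{xy\<in>{..<n} \<times> {..<n}. P (fst xy) (snd xy)}. c)"
    using sum.inter_filter[of "{..<n} \<times> {..<n}" "\<lambda>_. c" "\<lambda>xy. P (fst xy) (snd xy)"] by simp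
  also have "{xy\<in>{..<n} \<times> {..<n}. P (fst xy) (snd xy)} = {(x,y). x < n \<and> y < n \<and> P x y}"
    by auto
  finally show ?thesis by simp
qed

lemma integrable_bounded_pmf:
  fixes f :: "'a \<Rightarrow> real"
  assumes "\<And>x. \<bar>f x\<bar> \<le> B"
  shows "integrable (measure_pmf M) f"
  by (rule measure_pmf.integrable_const_bound[where B=B]) (use assms in auto)

lemma main_bound:
  fixes R :: "nat pmf" and n D :: nat and t \<delta> :: real
  assumes n: "0 < n" and t: "0 < t" and \<delta>: "0 < \<delta>"
  defines "p \<equiv> (\<Sum>i=1..n. tailf R i) / real n"
  defines "H \<equiv> (\<Sum>i=1..n. tailf R (max i (Suc D)))"
  shows "measure_pmf.prob (X_law R n t)
           {X. \<bar>real (card ({0..<n} - X)) - real n * exp (- t * p)\<bar> \<ge> \<delta> * (real n * exp (- t * p))}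
         \<le> (real n * real D ^ 2 * exp (t * p) + (real n)^2 * (exp (t * H / real n) - 1)) / (\<delta>^2 * (real n)^2)"
proof -
  let ?M = "X_law R n t"
  let ?Y = "\<lambda>X. real (card ({0..<n} - X))"
  let ?s = "\<lambda>x y. measure_pmf.prob (Ol R n) {Z. x \<in> Z \<and> y \<in> Z}"
  have Ybd: "\<bar>?Y X\<bar> \<le> real n" for X
  proof -
    have "card ({0..<n} - X) \<le> card {0..<n}" by (rule card_mono) auto
    then show ?thesis by simp
  qed
  have intY: "integrable (measure_pmf ?M) ?Y"
    by (rule integrable_bounded_pmf[OF Ybd])
  have intY2: "integrable (measure_pmf ?M) (\<lambda>X. (?Y X)^2)"
  proof (rule integrable_bounded_pmf)
    fix X show "\<bar>(?Y X)^2\<bar> \<le> (real n)^2"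
      using Ybd[of X] by (simp add: abs_le_square_iff power_mono)
  qed
  have pt: "measure_pmf.prob (Ol R n) {Z. x \<in> Z} = p" if "x < n" for x
    unfolding p_def by (rule prob_pt[OF n that])
  have EY: "measure_pmf.expectation ?M ?Y = real n * exp (- t * p)"
  proof -
    have "measure_pmf.expectation ?M ?Y = measure_pmf.expectation ?M (\<lambda>X. \<Sum>x<n. indicator {X. {x} \<inter> X = {}} X)"
      by (simp only: Y_sum)
    also have "\<dots> = (\<Sum>x<n. measure_pmf.expectation ?M (indicator {X. {x} \<inter> X = {}}))"
      by (rule Bochner_Integration.integral_sum) (rule integrable_bounded_pmf[where B=1], simp)
    also have "\<dots> = (\<Sum>x<n. measure_pmf.prob ?M {X. {x} \<inter> X = {}})"
      by simp
    also have "\<dots> = (\<Sum>x<n. exp (- t * p))"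
    proof (rule sum.cong[OF refl])
      fix x assume x: "x \<in> {..<n}"
      have "{Z. {x} \<inter> Z = {}} = UNIV - {Z. x \<in> Z}" by auto
      then have "measure_pmf.prob (Ol R n) {Z. {x} \<inter> Z = {}} = 1 - p"
        using measure_pmf.prob_compl[of "{Z. x \<in> Z}" "Ol R n"] pt[of x] x by simp
      then show "measure_pmf.prob ?M {X. {x} \<inter> X = {}} = exp (- t * p)"
        using prob_X_avoid[OF t, of R n "{x}"] by simp
    qed
    finally show ?thesis by simp
  qed
  have EY2: "measure_pmf.expectation ?M (\<lambda>X. (?Y X)^2) = (\<Sum>x<n. \<Sum>y<n. exp (- t * (2 * p - ?s x y)))"
  proof -
    have "measure_pmf.expectation ?M (\<lambda>X. (?Y X)^2) =
        measure_pmf.expectation ?M (\<lambda>X. \<Sum>x<n. \<Sum>y<n. indicator {X. {x, y} \<inter> X = {}} X)"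
      by (simp only: Y2_sum)
    also have "\<dots> = (\<Sum>x<n. measure_pmf.expectation ?M (\<lambda>X. \<Sum>y<n. indicator {X. {x, y} \<inter> X = {}} X))"
      by (rule Bochner_Integration.integral_sum)
         (rule Bochner_Integration.integrable_sum, rule integrable_bounded_pmf[where B=1], simp)
    also have "\<dots> = (\<Sum>x<n. \<Sum>y<n. measure_pmf.expectation ?M (indicator {X. {x, y} \<inter> X = {}}))"
      by (intro sum.cong refl Bochner_Integration.integral_sum)
         (rule integrable_bounded_pmf[where B=1], simp)
    also have "\<dots> = (\<Sum>x<n. \<Sum>y<n. measure_pmf.prob ?M {X. {x, y} \<inter> X = {}})"
      by simp
    also have "\<dots> = (\<Sum>x<n. \<Sum>y<n. exp (- t * (2 * p - ?s x y)))"
    proof (intro sum.cong refl)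
      fix x y assume x: "x \<in> {..<n}" and y: "y \<in> {..<n}"
      have "measure_pmf.prob (Ol R n) {Z. {x, y} \<inter> Z = {}} = 1 - (2 * p - ?s x y)"
        using prob_avoid_pair[of R n x y] pt[of x] pt[of y] x y by simp
      then show "measure_pmf.prob ?M {X. {x, y} \<inter> X = {}} = exp (- t * (2 * p - ?s x y))"
        using prob_X_avoid[OF t, of R n "{x, y}"] by simp
    qed
    finally show ?thesis .
  qed
  have Var: "measure_pmf.variance ?M ?Y = exp (- 2 * t * p) * (\<Sum>x<n. \<Sum>y<n. (exp (t * ?s x y) - 1))"
  proof -
    have "measure_pmf.variance ?M ?Y = measure_pmf.expectation ?M (\<lambda>X. (?Y X)^2) - (measure_pmf.expectation ?M ?Y)^2"
      by (rule measure_pmf.variance_eq[OF intY intY2])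
    also have "\<dots> = (\<Sum>x<n. \<Sum>y<n. exp (- t * (2 * p - ?s x y))) - (real n * exp (- t * p))^2"
      by (simp only: EY EY2)
    also have "(real n * exp (- t * p))^2 = (\<Sum>x<n. \<Sum>y<n. exp (- 2 * t * p))"
      by (simp add: power2_eq_square exp_add[symmetric])
    also have "(\<Sum>x<n. \<Sum>y<n. exp (- t * (2 * p - ?s x y))) - (\<Sum>x<n. \<Sum>y<n. exp (- 2 * t * p))
        = (\<Sum>x<n. \<Sum>y<n. exp (- 2 * t * p) * (exp (t * ?s x y) - 1))"
    proof -
      have "(\<Sum>x<n. \<Sum>y<n. exp (- t * (2 * p - ?s x y))) - (\<Sum>x<n. \<Sum>y<n. exp (- 2 * t * p))
         = (\<Sum>x<n. \<Sum>y<n. exp (- t * (2 * p - ?s x y)) - exp (- 2 * t * p))"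
        by (simp only: sum_subtractf)
      also have "\<dots> = (\<Sum>x<n. \<Sum>y<n. exp (- 2 * t * p) * (exp (t * ?s x y) - 1))"
      proof (intro sum.cong refl)
        fix x y
        have "exp (- t * (2 * p - ?s x y)) = exp (- 2 * t * p) * exp (t * ?s x y)"
          by (simp add: exp_add[symmetric] algebra_simps)
        then show "exp (- t * (2 * p - ?s x y)) - exp (- 2 * t * p) = exp (- 2 * t * p) * (exp (t * ?s x y) - 1)"
          by (simp add: right_diff_distrib)
      qed
      finally show ?thesis .
    qed
    also have "\<dots> = exp (- 2 * t * p) * (\<Sum>x<n. \<Sum>y<n. (exp (t * ?s x y) - 1))"
      by (simp add: sum_distrib_left)
    finally show ?thesis .
  qed
  have H0: "0 \<le> H" unfolding H_def by (intro sum_nonneg) (simp add: tailf_def)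
  have p0: "0 \<le> p" unfolding p_def by (intro divide_nonneg_nonneg sum_nonneg) (auto simp: tailf_def)
  have termb: "exp (t * ?s x y) - 1 \<le> (if close n D x y then exp (t * p) else 0) + (exp (t * H / real n) - 1)"
    if x: "x < n" and y: "y < n" for x y
  proof -
    have e0: "0 \<le> exp (t * H / real n) - 1" using H0 t n by simp
    show ?thesis
    proof (cases "close n D x y")
      case True
      have "?s x y \<le> p" using prob_pair_le_pt[of R n x y] pt[OF x] by simp
      then have "exp (t * ?s x y) \<le> exp (t * p)" using t by simp
      then show ?thesis using True e0 by (simp only: if_True)
    next
      case False
      have "?s x y \<le> H / real n" unfolding H_def by (rule prob_pair_far[OF n x y False])
      then have "t * ?s x y \<le> t * (H / real n)" using t
        by (intro mult_left_mono) auto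
      then have "exp (t * ?s x y) \<le> exp (t * H / real n)" by simp
      then show ?thesis using False by simp
    qed
  qed
  have S: "(\<Sum>x<n. \<Sum>y<n. (exp (t * ?s x y) - 1)) \<le> real n * real D ^ 2 * exp (t * p) + (real n)^2 * (exp (t * H / real n) - 1)"
  proof -
    have "(\<Sum>x<n. \<Sum>y<n. (exp (t * ?s x y) - 1)) \<le>
        (\<Sum>x<n. \<Sum>y<n. (if close n D x y then exp (t * p) else 0) + (exp (t * H / real n) - 1))"
      by (intro sum_mono termb) auto
    also have "\<dots> = (\<Sum>x<n. \<Sum>y<n. (if close n D x y then exp (t * p) else 0)) + (real n)^2 * (exp (t * H / real n) - 1)"
      by (simp add: sum.distrib power2_eq_square)
    also have "(\<Sum>x<n. \<Sum>y<n. (if close n D x y then exp (t * p) else 0)) = exp (t * p) * real (card {(x,y). x < n \<and> y < n \<and> close n D x y})"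
      by (rule sum_if_const_card)
    also have "\<dots> \<le> exp (t * p) * (real n * real D ^ 2)"
    proof -
      have "real (card {(x,y). x < n \<and> y < n \<and> close n D x y}) \<le> real (n * D^2)"
        using card_close[of n D] by linarith
      then show ?thesis by simp
    qed
    finally show ?thesis by (simp add: mult_ac)
  qed
  define b where "b = real n * exp (- t * p)"
  have b0: "0 < b" unfolding b_def using n by simp
  have "measure_pmf.prob ?M {X \<in> space (measure_pmf ?M). \<delta> * b \<le> \<bar>?Y X - measure_pmf.expectation ?M ?Y\<bar>}
      \<le> measure_pmf.variance ?M ?Y / (\<delta> * b)^2"
    by (rule measure_pmf.Chebyshev_inequality) (use intY2 \<delta> b0 in auto)
  then have "measure_pmf.prob ?M {X. \<bar>?Y X - b\<bar> \<ge> \<delta> * b} \<le> measure_pmf.variance ?M ?Y / (\<delta> * b)^2"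
    by (simp add: EY b_def)
  also have "\<dots> = (\<Sum>x<n. \<Sum>y<n. (exp (t * ?s x y) - 1)) / (\<delta>^2 * (real n)^2)"
  proof -
    have "(\<delta> * b)^2 = exp (- 2 * t * p) * (\<delta>^2 * (real n)^2)"
      unfolding b_def by (simp add: power_mult_distrib power2_eq_square exp_add[symmetric])
    then show ?thesis unfolding Var by simp
  qed
  also have "\<dots> \<le> (real n * real D ^ 2 * exp (t * p) + (real n)^2 * (exp (t * H / real n) - 1)) / (\<delta>^2 * (real n)^2)"
    by (rule divide_right_mono[OF S]) simp
  finally show ?thesis unfolding b_def .
qed

lemma powr_step:
  fixes x lam :: real
  assumes x: "1 \<le> x" and lam: "0 < lam"
  shows "lam * (x + 1) powr (- 1 - lam) \<le> x powr (- lam) - (x + 1) powr (- lam)"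
proof -
  have x0: "0 < x" using x by simp
  have l: "1 / (x + 1) \<le> ln (x + 1) - ln x"
  proof -
    have "ln (x / (x + 1)) \<le> x / (x + 1) - 1" by (rule ln_le_minus_one) (use x0 in simp)
    also have "x / (x + 1) - 1 = - (1 / (x + 1))" using x0 by (simp add: field_simps)
    finally show ?thesis using x0 by (simp add: ln_div)
  qed
  have "x powr (- lam) = (x + 1) powr (- lam) * exp (lam * (ln (x + 1) - ln x))"
    using x0 by (simp add: powr_def exp_add[symmetric] algebra_simps)
  also have "\<dots> \<ge> (x + 1) powr (- lam) * (1 + lam / (x + 1))"
  proof (rule mult_left_mono)
    have "1 + lam / (x + 1) \<le> 1 + lam * (ln (x + 1) - ln x)"
      using mult_left_mono[OF l, of lam] lam by simp
    also have "\<dots> \<le> exp (lam * (ln (x + 1) - ln x))" by (rule exp_ge_add_one_self)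
    finally show "1 + lam / (x + 1) \<le> exp (lam * (ln (x + 1) - ln x))" .
  qed simp
  finally have "(x + 1) powr (- lam) * (1 + lam / (x + 1)) \<le> x powr (- lam)" .
  moreover have "(x + 1) powr (- 1 - lam) = (x + 1) powr (- lam) / (x + 1)"
  proof -
    have "- 1 - lam = - lam - 1" by simp
    then have "(x + 1) powr (- 1 - lam) = (x + 1) powr (- lam - 1)" by (simp only:)
    also have "\<dots> = (x + 1) powr (- lam) / (x + 1) powr 1" by (rule powr_diff)
    finally show ?thesis using x0 by simp
  qed
  ultimately show ?thesis by (simp add: field_simps)
qed

lemma tele_sum:
  fixes lam :: real and a n :: nat
  assumes a: "1 \<le> a" and an: "a \<le> n" and lam: "0 < lam"
  shows "(\<Sum>i\<in>{a<..n}. lam * real i powr (- 1 - lam)) \<le> real a powr (- lam) - real n powr (- lam)"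
  using an
proof (induction n rule: dec_induct)
  case base
  then show ?case by simp
next
  case (step m)
  have "{a<..Suc m} = insert (Suc m) {a<..m}" using step by auto
  then have "(\<Sum>i\<in>{a<..Suc m}. lam * real i powr (- 1 - lam)) =
      lam * real (Suc m) powr (- 1 - lam) + (\<Sum>i\<in>{a<..m}. lam * real i powr (- 1 - lam))"
    by simp
  also have "\<dots> \<le> (real m powr (- lam) - real (Suc m) powr (- lam)) + (real a powr (- lam) - real m powr (- lam))"
  proof (rule add_mono)
    have m1: "1 \<le> real m" using step a by simp
    have e: "real (Suc m) = real m + 1" by simp
    show "lam * real (Suc m) powr (- 1 - lam) \<le> real m powr (- lam) - real (Suc m) powr (- lam)"
      unfolding e by (rule powr_step[OF m1 lam])
    show "(\<Sum>i\<in>{a<..m}. lam * real i powr (- 1 - lam)) \<le> real a powr (- lam) - real m powr (- lam)"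
      by (rule step.IH)
  qed
  finally show ?case by simp
qed

lemma tele_sum':
  fixes lam :: real and a n :: nat
  assumes a: "1 \<le> a" and lam: "0 < lam"
  shows "(\<Sum>i\<in>{a<..n}. real i powr (- 1 - lam)) \<le> real a powr (- lam) / lam"
proof (cases "a \<le> n")
  case True
  have "lam * (\<Sum>i\<in>{a<..n}. real i powr (- 1 - lam)) \<le> real a powr (- lam) - real n powr (- lam)"
    using tele_sum[OF a True lam] by (simp add: sum_distrib_left)
  also have "\<dots> \<le> real a powr (- lam)" by simp
  finally show ?thesis using lam by (simp add: field_simps)
next
  case False
  then have "{a<..n} = {}" by auto
  then show ?thesis using lam by simp
qed

lemma tailf_nonneg: "0 \<le> tailf R i" by (simp add: tailf_def)

lemma tailf_le1: "tailf R i \<le> 1" by (simp add: tailf_def)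

lemma tailf_mono: "i \<le> j \<Longrightarrow> tailf R j \<le> tailf R i"
  unfolding tailf_def by (rule measure_pmf.finite_measure_mono) auto

lemma H_bound:
  fixes lam :: real and K D n :: nat
  assumes lam: "0 < lam" and K: "1 \<le> K" and KD: "K \<le> D"
    and fb: "\<And>i. K \<le> i \<Longrightarrow> tailf R i \<le> real i powr (- 1 - lam)"
  shows "(\<Sum>i=1..n. tailf R (max i (Suc D))) \<le> (1 + 1 / lam) * real D powr (- lam)"
proof -
  have D1: "1 \<le> D" using K KD by simp
  have "(\<Sum>i=1..n. tailf R (max i (Suc D))) \<le>
      (\<Sum>i=1..n. (if i \<le> D then tailf R (Suc D) else 0) + (if D < i then tailf R i else 0))"
  proof (intro sum_mono)
    fix i
    have "max i (Suc D) = (if i \<le> D then Suc D else i)" by auto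
    then show "tailf R (max i (Suc D)) \<le> (if i \<le> D then tailf R (Suc D) else 0) + (if D < i then tailf R i else 0)"
      by simp
  qed
  also have "\<dots> = (\<Sum>i=1..n. (if i \<le> D then tailf R (Suc D) else 0)) + (\<Sum>i=1..n. (if D < i then tailf R i else 0))"
    by (rule sum.distrib)
  also have "(\<Sum>i=1..n. (if i \<le> D then tailf R (Suc D) else 0)) = tailf R (Suc D) * real (card {i\<in>{1..n}. i \<le> D})"
    using sum.inter_filter[of "{1..n}" "\<lambda>_. tailf R (Suc D)" "\<lambda>i. i \<le> D"] by (simp add: mult.commute)
  also have "(\<Sum>i=1..n. (if D < i then tailf R i else 0)) = (\<Sum>i\<in>{D<..n}. tailf R i)"
  proof -
    have "(\<Sum>i=1..n. (if D < i then tailf R i else 0)) = (\<Sum>i\<in>{i\<in>{1..n}. D < i}. tailf R i)"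
      using sum.inter_filter[of "{1..n}" "\<lambda>i. tailf R i" "\<lambda>i. D < i"] by simp
    also have "{i\<in>{1..n}. D < i} = {D<..n}" by auto
    finally show ?thesis .
  qed
  also have "tailf R (Suc D) * real (card {i\<in>{1..n}. i \<le> D}) \<le> real D powr (- lam)"
  proof -
    have "card {i\<in>{1..n}. i \<le> D} \<le> card {1..D}" by (rule card_mono) auto
    then have c: "real (card {i\<in>{1..n}. i \<le> D}) \<le> real D" by simp
    have "tailf R (Suc D) * real (card {i\<in>{1..n}. i \<le> D}) \<le> real (Suc D) powr (- 1 - lam) * real D"
      using fb[of "Suc D"] KD c by (intro mult_mono) (auto simp: tailf_nonneg)
    also have "\<dots> \<le> real (Suc D) powr (- 1 - lam) * real (Suc D)" by (intro mult_left_mono) auto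
    also have "\<dots> = real (Suc D) powr (- lam)"
    proof -
      have y0: "0 < real (Suc D)" by (simp del: of_nat_Suc)
      have "real (Suc D) powr (- 1 - lam) * real (Suc D) = real (Suc D) powr (- 1 - lam) * real (Suc D) powr 1"
        using y0 by (simp del: of_nat_Suc)
      also have "\<dots> = real (Suc D) powr (- 1 - lam + 1)" by (rule powr_add[symmetric])
      also have "- 1 - lam + 1 = - lam" by simp
      finally show ?thesis .
    qed
    also have "\<dots> \<le> real D powr (- lam)"
      by (rule powr_mono2') (use lam D1 in auto)
    finally show ?thesis .
  qed
  also have "(\<Sum>i\<in>{D<..n}. tailf R i) \<le> (\<Sum>i\<in>{D<..n}. real i powr (- 1 - lam))"
    by (intro sum_mono fb) (use KD in auto)
  also have "\<dots> \<le> real D powr (- lam) / lam" by (rule tele_sum'[OF D1 lam])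
  finally show ?thesis by (simp add: field_simps)
qed

lemma decay_bound:
  assumes lim: "((\<lambda>k. tailf R k * real k powr (1 + lam)) \<longlongrightarrow> 0) sequentially"
  obtains K where "1 \<le> K" "\<And>i. K \<le> i \<Longrightarrow> tailf R i \<le> real i powr (- 1 - lam)"
proof -
  have "eventually (\<lambda>k. tailf R k * real k powr (1 + lam) < 1) sequentially"
    using order_tendstoD(2)[OF lim, of 1] by simp
  then obtain N where N: "\<And>k. N \<le> k \<Longrightarrow> tailf R k * real k powr (1 + lam) < 1"
    unfolding eventually_sequentially by blast
  show ?thesis
  proof (rule that[of "max N 1"])
    fix i assume i: "max N 1 \<le> i"
    then have i0: "0 < real i" by simp
    have "tailf R i * real i powr (1 + lam) < 1" using N i by simp
    then have "tailf R i < 1 / real i powr (1 + lam)" using i0 by (simp add: field_simps)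
    also have "1 / real i powr (1 + lam) = real i powr (- 1 - lam)"
    proof -
      have "- 1 - lam = - (1 + lam)" by simp
      then have "real i powr (- 1 - lam) = real i powr (- (1 + lam))" by (simp only:)
      also have "\<dots> = inverse (real i powr (1 + lam))" by (rule powr_minus)
      finally show ?thesis by (simp add: divide_inverse)
    qed
    finally show "tailf R i \<le> real i powr (- 1 - lam)" by simp
  qed simp
qed

lemma partial_bound:
  fixes lam :: real and K m :: nat
  assumes lam: "0 < lam" and K: "1 \<le> K"
    and fb: "\<And>i. K \<le> i \<Longrightarrow> tailf R i \<le> real i powr (- 1 - lam)"
  shows "(\<Sum>i=1..m. tailf R i) \<le> real K + real K powr (- lam) / lam"
proof -
  have "(\<Sum>i=1..m. tailf R i) \<le> (\<Sum>i=1..m. (if i \<le> K then 1 else 0) + (if K < i then tailf R i else 0))"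
    by (intro sum_mono) (auto simp: tailf_le1)
  also have "\<dots> = (\<Sum>i=1..m. (if i \<le> K then 1 else 0)) + (\<Sum>i=1..m. (if K < i then tailf R i else 0))"
    by (rule sum.distrib)
  also have "(\<Sum>i=1..m. (if i \<le> K then 1 else 0)) = real (card {i\<in>{1..m}. i \<le> K})"
    using sum.inter_filter[of "{1..m}" "\<lambda>_. 1::real" "\<lambda>i. i \<le> K"] by simp
  also have "\<dots> \<le> real K"
  proof -
    have "card {i\<in>{1..m}. i \<le> K} \<le> card {1..K}" by (rule card_mono) auto
    then show ?thesis by simp
  qed
  also have "(\<Sum>i=1..m. (if K < i then tailf R i else 0)) = (\<Sum>i\<in>{K<..m}. tailf R i)"
  proof -
    have "(\<Sum>i=1..m. (if K < i then tailf R i else 0)) = (\<Sum>i\<in>{i\<in>{1..m}. K < i}. tailf R i)"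
      using sum.inter_filter[of "{1..m}" "\<lambda>i. tailf R i" "\<lambda>i. K < i"] by simp
    also have "{i\<in>{1..m}. K < i} = {K<..m}" using K by auto
    finally show ?thesis .
  qed
  also have "(\<Sum>i\<in>{K<..m}. tailf R i) \<le> (\<Sum>i\<in>{K<..m}. real i powr (- 1 - lam))"
    by (intro sum_mono fb) auto
  also have "\<dots> \<le> real K powr (- lam) / lam" by (rule tele_sum'[OF K lam])
  finally show ?thesis by simp
qed

lemma integrable_R:
  assumes bnd: "\<And>m. (\<Sum>i=1..m. tailf R i) \<le> S0"
  shows "integrable (measure_pmf R) (\<lambda>r. real r)"
proof (rule integrableI_bounded)
  show "(\<lambda>r. real r) \<in> borel_measurable (measure_pmf R)" by simp
  let ?f = "\<lambda>m r. ennreal (real (min r m))"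
  have inc: "incseq ?f"
    by (auto simp: incseq_def le_fun_def intro!: ennreal_leI)
  have sup: "(SUP m. ?f m r) = ennreal (real r)" for r
  proof (rule antisym)
    show "(SUP m. ?f m r) \<le> ennreal (real r)" by (rule SUP_least) (auto intro!: ennreal_leI)
    show "ennreal (real r) \<le> (SUP m. ?f m r)" by (rule SUP_upper2[of r]) auto
  qed
  have "(\<integral>\<^sup>+ r. ennreal (norm (real r)) \<partial>measure_pmf R) = (\<integral>\<^sup>+ r. (SUP m. ?f m r) \<partial>measure_pmf R)"
    by (simp add: sup)
  also have "\<dots> = (SUP m. \<integral>\<^sup>+ r. ?f m r \<partial>measure_pmf R)"
    by (rule nn_integral_monotone_convergence_SUP[OF inc]) simp
  also have "\<dots> \<le> ennreal S0"
  proof (rule SUP_least)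
    fix m
    have "(\<integral>\<^sup>+ r. ?f m r \<partial>measure_pmf R) = ennreal (measure_pmf.expectation R (\<lambda>r. real (min r m)))"
      by (rule nn_integral_eq_integral) (auto intro!: integrable_bounded_pmf[where B="real m"])
    also have "\<dots> = ennreal (\<Sum>i=1..m. tailf R i)" by (simp add: expect_min)
    also have "\<dots> \<le> ennreal S0" by (rule ennreal_leI[OF bnd])
    finally show "(\<integral>\<^sup>+ r. ?f m r \<partial>measure_pmf R) \<le> ennreal S0" .
  qed
  also have "\<dots> < \<infinity>" by simp
  finally show "(\<integral>\<^sup>+ r. ennreal (norm (real r)) \<partial>measure_pmf R) < \<infinity>" .
qed

lemma partial_le_mean:
  assumes int: "integrable (measure_pmf R) (\<lambda>r. real r)"
  shows "(\<Sum>i=1..m. tailf R i) \<le> meanR R"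
proof -
  have "(\<Sum>i=1..m. tailf R i) = measure_pmf.expectation R (\<lambda>r. real (min r m))" by (simp add: expect_min)
  also have "\<dots> \<le> measure_pmf.expectation R (\<lambda>r. real r)"
    by (rule Bochner_Integration.integral_mono[OF _ int]) (auto intro!: integrable_bounded_pmf[where B="real m"])
  finally show ?thesis unfolding meanR_def .
qed

lemma tailf_1:
  assumes pos: "0 \<notin> set_pmf R"
  shows "tailf R 1 = 1"
proof -
  have "{1::nat..} = UNIV - {0}" by auto
  then have "tailf R 1 = 1 - measure_pmf.prob R {0}"
    unfolding tailf_def using measure_pmf.prob_compl[of "{0}" R] by simp
  also have "measure_pmf.prob R {0} = 0" using pos by (simp add: measure_pmf_single set_pmf_iff)
  finally show ?thesis by simp
qed

lemma ln_powr_lim: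
  assumes e: "0 < e"
  shows "((\<lambda>n::nat. ln (real n) * real n powr (- e)) \<longlongrightarrow> 0) sequentially"
proof (rule tendsto_sandwich[of "\<lambda>_. 0" _ _ "\<lambda>n. (2 / e) * real n powr (- e / 2)"])
  show "eventually (\<lambda>n. 0 \<le> ln (real n) * real n powr (- e)) sequentially"
    by (rule eventually_sequentiallyI[of 1]) simp
  show "eventually (\<lambda>n. ln (real n) * real n powr (- e) \<le> (2 / e) * real n powr (- e / 2)) sequentially"
  proof (rule eventually_sequentiallyI[of 1])
    fix n :: nat assume n: "1 \<le> n"
    then have n0: "0 < real n" by simp
    have "(e / 2) * ln (real n) = ln (real n powr (e / 2))" using n0 by simp
    also have "\<dots> \<le> real n powr (e / 2) - 1" by (rule ln_le_minus_one) (use n0 in simp)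
    also have "\<dots> \<le> real n powr (e / 2)" by simp
    finally have l: "ln (real n) \<le> (2 / e) * real n powr (e / 2)" using e by (simp add: field_simps)
    have "ln (real n) * real n powr (- e) \<le> (2 / e) * real n powr (e / 2) * real n powr (- e)"
      by (rule mult_right_mono[OF l]) simp
    also have "\<dots> = (2 / e) * (real n powr (e / 2) * real n powr (- e))" by simp
    also have "real n powr (e / 2) * real n powr (- e) = real n powr (- e / 2)"
      by (simp add: powr_add[symmetric])
    finally show "ln (real n) * real n powr (- e) \<le> (2 / e) * real n powr (- e / 2)" .
  qed
  have "((\<lambda>n::nat. real n powr (- e / 2)) \<longlongrightarrow> 0) sequentially"
    by (rule tendsto_neg_powr[OF _ filterlim_real_sequentially]) (use e in simp)
  then show "((\<lambda>n. (2 / e) * real n powr (- e / 2)) \<longlongrightarrow> 0) sequentially"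
    using tendsto_mult_right_zero by blast
qed simp

theorem mainTheorem7:
  fixes R :: "nat pmf" and \<alpha> \<delta> :: real
  assumes pos: "0 \<notin> set_pmf R"
    and decay: "\<exists>lam>0. ((\<lambda>k. tailf R k * real k powr (1 + lam)) \<longlongrightarrow> 0) sequentially"
    and alpha: "0 < \<alpha>" "\<alpha> < 1"
    and delta: "0 < \<delta>"
  shows "((\<lambda>n::nat.
      let \<mu> = meanR R;
          g = (\<Sum>i=1..n. tailf R i) / \<mu>;
          t = \<alpha> * real n * ln (real n) / \<mu>;
          b = real n powr (1 - g * \<alpha>)
      in measure_pmf.prob (X_law R n t)
           {X. \<bar>real (card ({0..<n} - X)) - b\<bar> \<ge> \<delta> * b})
     \<longlongrightarrow> 0) sequentially"
proof -
  obtain lam where lam: "0 < lam" and lim: "((\<lambda>k. tailf R k * real k powr (1 + lam)) \<longlongrightarrow> 0) sequentially"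
    using decay by blast
  obtain K where K: "1 \<le> K" and fb: "\<And>i. K \<le> i \<Longrightarrow> tailf R i \<le> real i powr (- 1 - lam)"
    using decay_bound[OF lim] by blast
  have int: "integrable (measure_pmf R) (\<lambda>r. real r)"
    by (rule integrable_R[OF partial_bound[OF lam K fb]])
  define \<mu> where "\<mu> = meanR R"
  have Sle: "(\<Sum>i=1..m. tailf R i) \<le> \<mu>" for m
    unfolding \<mu>_def by (rule partial_le_mean[OF int])
  have mu1: "1 \<le> \<mu>" using Sle[of 1] tailf_1[OF pos] by simp
  define \<beta> where "\<beta> = (1 - \<alpha>) / 4"
  define c1 where "c1 = 1 + 1 / lam"
  define A where "A = \<alpha> * c1 / \<mu>"
  define e1 where "e1 = (1 - \<alpha>) / 2"
  define e2 where "e2 = \<beta> * lam"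
  have beta0: "0 < \<beta>" unfolding \<beta>_def using alpha by simp
  have e1_0: "0 < e1" unfolding e1_def using alpha by simp
  have e2_0: "0 < e2" unfolding e2_def using beta0 lam by simp
  have A0: "0 \<le> A" unfolding A_def c1_def using alpha mu1 lam by simp
  define B where "B = (\<lambda>n::nat. (4 * real n powr (- e1) + (exp (A * (ln (real n) * real n powr (- e2))) - 1)) / \<delta>^2)"
  have Blim: "(B \<longlongrightarrow> 0) sequentially"
  proof -
    have l1: "((\<lambda>n::nat. real n powr (- e1)) \<longlongrightarrow> 0) sequentially"
      by (rule tendsto_neg_powr[OF _ filterlim_real_sequentially]) (use e1_0 in simp)
    have l2: "((\<lambda>n::nat. exp (A * (ln (real n) * real n powr (- e2)))) \<longlongrightarrow> exp (A * 0)) sequentially"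
      by (intro tendsto_intros ln_powr_lim e2_0)
    have "(B \<longlongrightarrow> (4 * 0 + (exp (A * 0) - 1)) / \<delta>^2) sequentially"
      unfolding B_def by (intro tendsto_intros l1 l2) (use delta in simp)
    then show ?thesis by simp
  qed
  have ev1: "eventually (\<lambda>n::nat. real K < real n powr \<beta>) sequentially"
  proof -
    have "((\<lambda>n::nat. real n powr (- \<beta>)) \<longlongrightarrow> 0) sequentially"
      by (rule tendsto_neg_powr[OF _ filterlim_real_sequentially]) (use beta0 in simp)
    then have "eventually (\<lambda>n::nat. real n powr (- \<beta>) < 1 / real K) sequentially"
      by (rule order_tendstoD(2)) (use K in simp)
    moreover have "eventually (\<lambda>n::nat. 1 \<le> n) sequentially" by (rule eventually_ge_at_top)
    ultimately show ?thesis
    proof eventually_elim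
      case (elim n)
      then have n0: "0 < real n" by simp
      have "real n powr (- \<beta>) = 1 / real n powr \<beta>" by (simp add: powr_minus divide_inverse)
      then have "1 / real n powr \<beta> < 1 / real K" using elim by simp
      then show ?case using K n0 by (simp add: field_simps)
    qed
  qed
  have ev: "eventually (\<lambda>n::nat. 2 \<le> n \<and> real K < real n powr \<beta>) sequentially"
    using eventually_conj[OF eventually_ge_at_top[of 2] ev1] by simp
  show ?thesis
    unfolding Let_def \<mu>_def[symmetric]
  proof (rule tendsto_sandwich[of "\<lambda>_. 0" _ _ B])
    show "eventually (\<lambda>n. 0 \<le> measure_pmf.prob (X_law R n (\<alpha> * real n * ln (real n) / \<mu>))
           {X. \<delta> * real n powr (1 - (\<Sum>i = 1..n. tailf R i) / \<mu> * \<alpha>) \<le>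
               \<bar>real (card ({0..<n} - X)) - real n powr (1 - (\<Sum>i = 1..n. tailf R i) / \<mu> * \<alpha>)\<bar>}) sequentially"
      by simp
    show "((\<lambda>_. 0) \<longlongrightarrow> (0::real)) sequentially" by simp
    show "(B \<longlongrightarrow> 0) sequentially" by (rule Blim)
    show "eventually (\<lambda>n. measure_pmf.prob (X_law R n (\<alpha> * real n * ln (real n) / \<mu>))
           {X. \<delta> * real n powr (1 - (\<Sum>i = 1..n. tailf R i) / \<mu> * \<alpha>) \<le>
               \<bar>real (card ({0..<n} - X)) - real n powr (1 - (\<Sum>i = 1..n. tailf R i) / \<mu> * \<alpha>)\<bar>} \<le> B n) sequentially"
      using ev
    proof eventually_elim
      case (elim n)
      then have n2: "2 \<le> n" and nK: "real K < real n powr \<beta>" by auto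
      have n0: "0 < n" using n2 by simp
      have rn0: "0 < real n" using n2 by simp
      have ln0: "0 < ln (real n)" using n2 by simp
      define S where "S = (\<Sum>i = 1..n. tailf R i)"
      define t where "t = \<alpha> * real n * ln (real n) / \<mu>"
      define p where "p = S / real n"
      define D where "D = nat \<lceil>real n powr \<beta>\<rceil>"
      define H where "H = (\<Sum>i=1..n. tailf R (max i (Suc D)))"
      have t0: "0 < t" unfolding t_def using alpha rn0 ln0 mu1 by simp
      have S0: "0 \<le> S" unfolding S_def by (intro sum_nonneg tailf_nonneg)
      have SM: "S \<le> \<mu>" unfolding S_def by (rule Sle)
      have tp: "t * p = \<alpha> * ln (real n) * (S / \<mu>)"
        unfolding t_def p_def using rn0 mu1 by (simp add: field_simps)
      have bb: "real n powr (1 - S / \<mu> * \<alpha>) = real n * exp (- t * p)"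
      proof -
        have "real n powr (1 - S / \<mu> * \<alpha>) = exp ((1 - S / \<mu> * \<alpha>) * ln (real n))"
          using rn0 by (simp add: powr_def)
        also have "\<dots> = exp (ln (real n)) * exp (- (\<alpha> * ln (real n) * (S / \<mu>)))"
          by (simp add: exp_add[symmetric] algebra_simps)
        also have "\<dots> = real n * exp (- t * p)" using rn0 tp by simp
        finally show ?thesis .
      qed
      have MB: "measure_pmf.prob (X_law R n t)
           {X. \<bar>real (card ({0..<n} - X)) - real n * exp (- t * p)\<bar> \<ge> \<delta> * (real n * exp (- t * p))}
         \<le> (real n * real D ^ 2 * exp (t * p) + (real n)^2 * (exp (t * H / real n) - 1)) / (\<delta>^2 * (real n)^2)"
        unfolding p_def S_def H_def by (rule main_bound[OF n0 t0 delta])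
      have nb1: "1 \<le> real n powr \<beta>" using n2 beta0 by (intro ge_one_powr_ge_zero) auto
      have Dge: "real n powr \<beta> \<le> real D" unfolding D_def by (rule real_nat_ceiling_ge)
      have Dle: "real D \<le> 2 * real n powr \<beta>"
      proof -
        have "real D \<le> real n powr \<beta> + 1" unfolding D_def using nb1 by linarith
        then show ?thesis using nb1 by simp
      qed
      have KD: "K \<le> D" using nK Dge by linarith
      have D2: "real D ^ 2 \<le> 4 * (real n powr \<beta>)^2"
      proof -
        have "real D ^ 2 \<le> (2 * real n powr \<beta>)^2" by (rule power_mono[OF Dle]) simp
        then show ?thesis by (simp add: power_mult_distrib)
      qed
      have Etp: "exp (t * p) \<le> real n powr \<alpha>"
      proof -
        have "S / \<mu> \<le> 1" using SM mu1 by simp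
        then have "\<alpha> * ln (real n) * (S / \<mu>) \<le> \<alpha> * ln (real n) * 1"
          using alpha ln0 by (intro mult_left_mono) auto
        then have "exp (t * p) \<le> exp (\<alpha> * ln (real n))" using tp by simp
        also have "\<dots> = real n powr \<alpha>" using rn0 by (simp add: powr_def mult.commute)
        finally show ?thesis .
      qed
      have HB: "H \<le> c1 * real n powr (- e2)"
      proof -
        have "H \<le> (1 + 1 / lam) * real D powr (- lam)"
          unfolding H_def by (rule H_bound[OF lam K KD fb])
        also have "real D powr (- lam) \<le> (real n powr \<beta>) powr (- lam)"
          by (rule powr_mono2') (use lam nb1 Dge n0 in auto)
        also have "(real n powr \<beta>) powr (- lam) = real n powr (- e2)"
          unfolding e2_def by (simp add: powr_powr)
        finally show ?thesis unfolding c1_def using lam by (simp add: mult_left_mono)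
      qed
      have tH: "t * H / real n \<le> A * (ln (real n) * real n powr (- e2))"
      proof -
        have "t * H / real n = (\<alpha> * ln (real n) / \<mu>) * H"
          unfolding t_def using rn0 by (simp add: field_simps)
        also have "\<dots> \<le> (\<alpha> * ln (real n) / \<mu>) * (c1 * real n powr (- e2))"
          by (rule mult_left_mono[OF HB]) (use alpha ln0 mu1 in simp)
        also have "\<dots> = A * (ln (real n) * real n powr (- e2))"
          unfolding A_def by (simp add: field_simps)
        finally show ?thesis .
      qed
      have pw: "real n powr (- e1) = (real n powr \<beta>)^2 * real n powr \<alpha> / real n"
      proof -
        have "- e1 = \<beta> + \<beta> + \<alpha> - 1" unfolding e1_def \<beta>_def by (simp add: field_simps)
        then have "real n powr (- e1) = real n powr (\<beta> + \<beta> + \<alpha> - 1)" by simp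
        also have "\<dots> = real n powr \<beta> * real n powr \<beta> * real n powr \<alpha> / real n powr 1"
          by (simp only: powr_add powr_diff)
        finally show ?thesis using rn0 by (simp add: power2_eq_square)
      qed
      have "(real n * real D ^ 2 * exp (t * p) + (real n)^2 * (exp (t * H / real n) - 1)) / (\<delta>^2 * (real n)^2)
          = (real D ^ 2 * exp (t * p) / real n + (exp (t * H / real n) - 1)) / \<delta>^2"
        using rn0 delta by (simp add: field_simps power2_eq_square)
      also have "\<dots> \<le> (4 * (real n powr \<beta>)^2 * real n powr \<alpha> / real n + (exp (A * (ln (real n) * real n powr (- e2))) - 1)) / \<delta>^2"
      proof (rule divide_right_mono[OF add_mono])
        show "real D ^ 2 * exp (t * p) / real n \<le> 4 * (real n powr \<beta>)^2 * real n powr \<alpha> / real n"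
          by (rule divide_right_mono[OF mult_mono[OF D2 Etp]]) auto
        show "exp (t * H / real n) - 1 \<le> exp (A * (ln (real n) * real n powr (- e2))) - 1"
          using tH by simp
      qed simp
      also have "\<dots> = B n" unfolding B_def pw by (simp add: field_simps)
      finally have fin: "(real n * real D ^ 2 * exp (t * p) + (real n)^2 * (exp (t * H / real n) - 1)) / (\<delta>^2 * (real n)^2) \<le> B n" .
      have ev_eq: "{X. \<delta> * real n powr (1 - S / \<mu> * \<alpha>) \<le> \<bar>real (card ({0..<n} - X)) - real n powr (1 - S / \<mu> * \<alpha>)\<bar>}
        = {X. \<bar>real (card ({0..<n} - X)) - real n * exp (- t * p)\<bar> \<ge> \<delta> * (real n * exp (- t * p))}"
        unfolding bb by simp
      show ?case
        using MB fin unfolding S_def[symmetric] t_def[symmetric] ev_eq by linarith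
    qed
  qed
qed

end
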